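(* Let all notions be as in the context. (1) If $(\Gamma,\mathsf{eval}\ e,S)\Longrightarrow^{*}(\Delta,\mathsf{eval}\ w,S)$ is a balanced evaluation (with $w$ a weak head normal form), then $\Gamma;\mathrm{upd}(S);e\Downarrow\Delta;w$. (2) If $(\Gamma,\mathsf{match}\ A\ m,S)\Longrightarrow^{*}(\Delta,\mathsf{match}\ [\,]\ r,S)$ is a balanced evaluation (with $r$ a matching result), then $\Gamma;\mathrm{upd}(S);A;m\Downarrow_M\Delta;r$.
   Context: The language $\lambda_{\mathrm{PMC}}$ (in normalized form). Expressions: $e ::= x \mid e\,y \mid \lambda m \mid c(y_1,\ldots,y_n)$, where $x,y,y_i$ are variables, $c$ ranges over constructors, and application arguments and constructor arguments are variables. Matchings: $m ::= \mathsf{ret}(e) \mid \mathsf{fail} \mid p \Rightarrow m \mid y \triangleright m \mid m_1 \mid m_2 \mid (m\ \mathsf{where}\ \{x_1=e_1;\ldots;x_n=e_n\})$ (return expression, failure, pattern match, argument supply, alternative, local possibly recursive bindings). Patterns: $p ::= x \mid c(p_1,\ldots,p_n)$ (patterns may be nested). The matching $y_1 \triangleright p_1 \Rightarrow \cdots \Rightarrow y_n \triangleright p_n \Rightarrow m$ associates to the right: $y_1 \triangleright (p_1 \Rightarrow (y_2 \triangleright (\cdots (p_n \Rightarrow m)\cdots)))$. $m[y/x]$ denotes capture-avoiding substitution of $y$ for free occurrences of $x$. Arity: $\mathrm{ar}(\mathsf{ret}(e))=0$, $\mathrm{ar}(\mathsf{fail})=0$, $\mathrm{ar}(p\Rightarrow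 m)=1+\mathrm{ar}(m)$, $\mathrm{ar}(y\triangleright m)=\max(0,\mathrm{ar}(m)-1)$, $\mathrm{ar}(m_1\mid m_2)=\mathrm{ar}(m_1)$ if $\mathrm{ar}(m_1)=\mathrm{ar}(m_2)$ (undefined otherwise), $\mathrm{ar}(m\ \mathsf{where}\ b)=\mathrm{ar}(m)$. Weak head normal forms: $w ::= \lambda m$ with $\mathrm{ar}(m)>0$, or $c(y_1,\ldots,y_n)$. Matching results: $r ::= \mathsf{ret}(e) \mid \mathsf{fail}$. A heap $\Gamma,\Delta,\Theta$ is a finite map from variables to expressions; $\Gamma[y\mapsto e]$ maps $y$ to $e$ and otherwise agrees with $\Gamma$. An argument stack $A$ is a list of variables; for such a list define $[\,]\triangleright e = e$ and $(y:ys)\triangleright e = ys \triangleright (e\,y)$. $L$ is a set of variables. Big-step semantics: two mutually inductive judgments $\Gamma;L;e \Downarrow \Delta;w$ and $\Gamma;L;A;m \Downarrow_M \Delta;r$ defined by the rules: (Whnf) $\Gamma;L;w \Downarrow \Gamma;w$. (Sat) if $\mathrm{ar}(m)=0$, $\Gamma;L;[\,];m \Downarrow_M \Delta;\mathsf{ret}(e)$ and $\Delta;L;e\Downarrow\Theta;w$, then $\Gamma;L;\lambda m \Downarrow \Theta;w$. (Var) if $\Gamma;L\cup\{y\};e \Downarrow \Delta;w$ then $\Gamma[y\mapsto e];L;y \Downarrow \Delta[y\mapsto w];w$. (App) if $\Gamma;L;e\Downarrow\Delta;\lambda m$ and $\Delta;L;\lambda(y\triangleright m)\Downarrow\Theta;w$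 then $\Gamma;L;(e\,y)\Downarrow\Theta;w$. (Return) $\Gamma;L;A;\mathsf{ret}(e)\Downarrow_M\Gamma;\mathsf{ret}(A\triangleright e)$. (Fail) $\Gamma;L;A;\mathsf{fail}\Downarrow_M\Gamma;\mathsf{fail}$. (Arg) if $\Gamma;L;(y:A);m\Downarrow_M\Delta;r$ then $\Gamma;L;A;y\triangleright m\Downarrow_M\Delta;r$. (Bind) if $\Gamma;L;A;m[y/x]\Downarrow_M\Delta;r$ then $\Gamma;L;(y:A);x\Rightarrow m\Downarrow_M\Delta;r$. (Cons1) if $\Gamma;L;y\Downarrow\Delta;c(y_1,\ldots,y_n)$ and $\Delta;L;A;y_1\triangleright p_1\Rightarrow\cdots\Rightarrow y_n\triangleright p_n\Rightarrow m\Downarrow_M\Theta;r$ then $\Gamma;L;(y:A);c(p_1,\ldots,p_n)\Rightarrow m\Downarrow_M\Theta;r$. (Cons2) if $\Gamma;L;y\Downarrow\Delta;c'(y_1,\ldots,y_k)$ with $c\neq c'$ then $\Gamma;L;(y:A);c(p_1,\ldots,p_n)\Rightarrow m\Downarrow_M\Delta;\mathsf{fail}$. (Alt1) if $\Gamma;L;A;m_1\Downarrow_M\Delta;\mathsf{ret}(e)$ then $\Gamma;L;A;(m_1\mid m_2)\Downarrow_M\Delta;\mathsf{ret}(e)$. (Alt2) if $\Gamma;L;A;m_1\Downarrow_M\Delta;\mathsf{fail}$ and $\Delta;L;A;m_2\Downarrow_M\Theta;r$ then $\Gamma;L;A;(m_1\mid m_2)\Downarrow_M\Theta;r$. (Where)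 if $\Gamma[y_i\mapsto\hat e_i];L;A;\hat m\Downarrow_M\Delta;r$ then $\Gamma;L;A;(m\ \mathsf{where}\ \{x_i=e_i\})\Downarrow_M\Delta;r$, where the $y_i$ are fresh (occur neither free nor bound in $\Gamma$, $L$, $A$, or $m$), $\hat e_i=e_i[y_1/x_1,\ldots,y_n/x_n]$ and $\hat m=m[y_1/x_1,\ldots,y_n/x_n]$. Abstract machine. Controls: $C ::= \mathsf{eval}\ e \mid \mathsf{match}\ A\ m$. Continuations: $k ::= y \mid\ !y \mid \$ \mid ?(A,m) \mid @(A, c(\vec p)\Rightarrow m)$. A return stack $S$ is a list of continuations. Configurations are triples $(\Gamma, C, S)$. Transitions $\Longrightarrow$: (App1) $(\Gamma,\mathsf{eval}\ (e\,y),S)\Longrightarrow(\Gamma,\mathsf{eval}\ e,y:S)$. (App2) $(\Gamma,\mathsf{eval}\ \lambda m,y:S)\Longrightarrow(\Gamma,\mathsf{eval}\ \lambda(y\triangleright m),S)$ if $\mathrm{ar}(m)>0$. (Sat) $(\Gamma,\mathsf{eval}\ \lambda m,S)\Longrightarrow(\Gamma,\mathsf{match}\ [\,]\ m,\$:S)$ if $\mathrm{ar}(m)=0$. (Var) $(\Gamma[y\mapsto e],\mathsf{eval}\ y,S)\Longrightarrow(\Gamma,\mathsf{eval}\ e,!y:S)$. (Update) $(\Gamma,\mathsf{eval}\ w,!y:S)\Longrightarrow(\Gamma[y\mapsto w],\mathsf{eval}\ w,S)$. (Return1A) $(\Gamma,\mathsf{match}\ A\ \mathsf{ret}(e),S)\Longrightarrow(\Gamma,\mathsf{match}\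 [\,]\ \mathsf{ret}(A\triangleright e),S)$ if $A\neq[\,]$. (Return1B) $(\Gamma,\mathsf{match}\ [\,]\ \mathsf{ret}(e),\$:S)\Longrightarrow(\Gamma,\mathsf{eval}\ e,S)$. (Return2) $(\Gamma,\mathsf{match}\ [\,]\ \mathsf{ret}(e),?(A',m):S)\Longrightarrow(\Gamma,\mathsf{match}\ [\,]\ \mathsf{ret}(e),S)$. (Bind) $(\Gamma,\mathsf{match}\ (y:A)\ (x\Rightarrow m),S)\Longrightarrow(\Gamma,\mathsf{match}\ A\ m[y/x],S)$. (Cons1) $(\Gamma,\mathsf{match}\ (y:A)\ (c(\vec p)\Rightarrow m),S)\Longrightarrow(\Gamma,\mathsf{eval}\ y,@(A,c(\vec p)\Rightarrow m):S)$. (Cons2) $(\Gamma,\mathsf{eval}\ c(y_1,\ldots,y_n),@(A,c(p_1,\ldots,p_n)\Rightarrow m):S)\Longrightarrow(\Gamma,\mathsf{match}\ A\ (y_1\triangleright p_1\Rightarrow\cdots\Rightarrow y_n\triangleright p_n\Rightarrow m),S)$. (Fail) $(\Gamma,\mathsf{eval}\ c'(y_1,\ldots,y_k),@(A,c(p_1,\ldots,p_n)\Rightarrow m):S)\Longrightarrow(\Gamma,\mathsf{match}\ [\,]\ \mathsf{fail},S)$ if $c\neq c'$. (Arg) $(\Gamma,\mathsf{match}\ A\ (y\triangleright m),S)\Longrightarrow(\Gamma,\mathsf{match}\ (y:A)\ m,S)$. (Alt1) $(\Gamma,\mathsf{match}\ A\ (m_1\mid m_2),S)\Longrightarrow(\Gamma,\mathsf{match}\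 A\ m_1,?(A,m_2):S)$. (Alt2) $(\Gamma,\mathsf{match}\ A'\ \mathsf{fail},?(A,m):S)\Longrightarrow(\Gamma,\mathsf{match}\ A\ m,S)$. (Where) $(\Gamma,\mathsf{match}\ A\ (m\ \mathsf{where}\ \{x_i=e_i\}),S)\Longrightarrow(\Gamma[y_i\mapsto\hat e_i],\mathsf{match}\ A\ \hat m,S)$ with $y_i$ fresh, $\hat e_i=e_i[y_1/x_1,\ldots,y_n/x_n]$, $\hat m=m[y_1/x_1,\ldots,y_n/x_n]$. $\Longrightarrow^{*}$ is the reflexive–transitive closure of $\Longrightarrow$. A sequence of transitions $(\Gamma,C,S)\Longrightarrow^{*}(\Delta,C',S)$ is balanced if the initial and final return stacks are identical and every intermediate return stack has the form $k_1:k_2:\cdots:k_n:S$ (an extension of the initial stack). For a return stack $S$, $\mathrm{upd}(S)=\{y : (!y)\in S\}$ is the set of variables marked for update in $S$. *)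

theory Defs
  imports Main
begin

type_synonym var = nat
type_synonym con = nat

datatype pat = PVar var | PCon con "pat list"

datatype expr =
    Var var
  | App expr var
  | Lam mtch
  | Con con "var list"
and mtch =
    Ret expr
  | Fail
  | PMatch pat mtch
  | Arg var mtch
  | Alt mtch mtch
  | Where mtch "(var \<times> expr) list"

primrec pv :: "pat \<Rightarrow> var list" where
  "pv (PVar x) = [x]"
| "pv (PCon c ps) = concat (map pv ps)"

primrec psub :: "(var \<Rightarrow> var) \<Rightarrow> pat \<Rightarrow> pat" where
  "psub \<sigma> (PVar x) = PVar (\<sigma> x)"
| "psub \<sigma> (PCon c ps) = PCon c (map (psub \<sigma>) ps)"

fun fv_e :: "expr \<Rightarrow> var set" and fv_m :: "mtch \<Rightarrow> var set" where
  "fv_e (Var x) = {x}"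
| "fv_e (App e y) = insert y (fv_e e)"
| "fv_e (Lam m) = fv_m m"
| "fv_e (Con c ys) = set ys"
| "fv_m (Ret e) = fv_e e"
| "fv_m Fail = {}"
| "fv_m (PMatch p m) = fv_m m - set (pv p)"
| "fv_m (Arg y m) = insert y (fv_m m)"
| "fv_m (Alt m1 m2) = fv_m m1 \<union> fv_m m2"
| "fv_m (Where m bs) =
     (fv_m m \<union> (\<Union>(x, e)\<in>set bs. fv_e e)) - fst ` set bs"

fun vars_e :: "expr \<Rightarrow> var set" and vars_m :: "mtch \<Rightarrow> var set" where
  "vars_e (Var x) = {x}"
| "vars_e (App e y) = insert y (vars_e e)"
| "vars_e (Lam m) = vars_m m"
| "vars_e (Con c ys) = set ys"
| "vars_m (Ret e) = vars_e e"
| "vars_m Fail = {}"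
| "vars_m (PMatch p m) = vars_m m \<union> set (pv p)"
| "vars_m (Arg y m) = insert y (vars_m m)"
| "vars_m (Alt m1 m2) = vars_m m1 \<union> vars_m m2"
| "vars_m (Where m bs) =
     vars_m m \<union> (\<Union>(x, e)\<in>set bs. insert x (vars_e e))"

definition fresh_var :: "var set \<Rightarrow> var" where
  "fresh_var A = (LEAST n. n \<notin> A)"

text \<open>Choose names for the binders \<open>bs\<close>: a binder keeps its name unless it
  would capture a variable of the set \<open>A\<close> (initially the image of the free variables
  of the binding construct under the substitution), in which case it is renamed to a
  fresh variable.\<close>
fun rebind :: "(var \<Rightarrow> var) \<Rightarrow> var set \<Rightarrow> var list \<Rightarrow> (var \<Rightarrow> var)" where
  "rebind \<sigma> A [] = \<sigma>"
| "rebind \<sigma> A (b # bs) =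
     (let b' = (if b \<in> A then fresh_var A else b)
      in rebind (\<sigma>(b := b')) (insert b' A) bs)"

fun subst_e :: "(var \<Rightarrow> var) \<Rightarrow> expr \<Rightarrow> expr"
and subst_m :: "(var \<Rightarrow> var) \<Rightarrow> mtch \<Rightarrow> mtch" where
  "subst_e \<sigma> (Var x) = Var (\<sigma> x)"
| "subst_e \<sigma> (App e y) = App (subst_e \<sigma> e) (\<sigma> y)"
| "subst_e \<sigma> (Lam m) = Lam (subst_m \<sigma> m)"
| "subst_e \<sigma> (Con c ys) = Con c (map \<sigma> ys)"
| "subst_m \<sigma> (Ret e) = Ret (subst_e \<sigma> e)"
| "subst_m \<sigma> Fail = Fail"
| "subst_m \<sigma> (PMatch p m) =
     (let \<sigma>' = rebind \<sigma> (\<sigma> ` fv_m (PMatch p m)) (pv p)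
      in PMatch (psub \<sigma>' p) (subst_m \<sigma>' m))"
| "subst_m \<sigma> (Arg y m) = Arg (\<sigma> y) (subst_m \<sigma> m)"
| "subst_m \<sigma> (Alt m1 m2) = Alt (subst_m \<sigma> m1) (subst_m \<sigma> m2)"
| "subst_m \<sigma> (Where m bs) =
     (let \<sigma>' = rebind \<sigma> (\<sigma> ` fv_m (Where m bs)) (map fst bs)
      in Where (subst_m \<sigma>' m) (map (\<lambda>(x, e). (\<sigma>' x, subst_e \<sigma>' e)) bs))"

definition ren :: "var list \<Rightarrow> var list \<Rightarrow> var \<Rightarrow> var" where
  "ren xs ys x = (case map_of (zip xs ys) x of Some y \<Rightarrow> y | None \<Rightarrow> x)"

definition subst1_m :: "var \<Rightarrow> var \<Rightarrow> mtch \<Rightarrow> mtch" where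
  "subst1_m y x m = subst_m (id(x := y)) m"

text \<open>\<open>None\<close> encodes "undefined".\<close>
fun ar :: "mtch \<Rightarrow> nat option" where
  "ar (Ret e) = Some 0"
| "ar Fail = Some 0"
| "ar (PMatch p m) = map_option Suc (ar m)"
| "ar (Arg y m) = map_option (\<lambda>n. n - 1) (ar m)"   (* max(0, ar m - 1) *)
| "ar (Alt m1 m2) = (if ar m1 = ar m2 then ar m1 else None)"
| "ar (Where m bs) = ar m"

fun is_whnf :: "expr \<Rightarrow> bool" where
  "is_whnf (Lam m) = (\<exists>n. ar m = Some n \<and> n > 0)"
| "is_whnf (Con c ys) = True"
| "is_whnf _ = False"

fun is_result :: "mtch \<Rightarrow> bool" where
  "is_result (Ret e) = True"
| "is_result Fail = True"
| "is_result _ = False"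

type_synonym heap = "var \<rightharpoonup> expr"

definition heap_vars :: "heap \<Rightarrow> var set" where
  "heap_vars \<Gamma> = dom \<Gamma> \<union> (\<Union>e\<in>ran \<Gamma>. vars_e e)"

definition apps :: "var list \<Rightarrow> expr \<Rightarrow> expr" where
  "apps A e = foldl App e A"

definition chain :: "var list \<Rightarrow> pat list \<Rightarrow> mtch \<Rightarrow> mtch" where
  "chain ys ps m = foldr (\<lambda>(y, p) m'. Arg y (PMatch p m')) (zip ys ps) m"

inductive bs_eval :: "heap \<Rightarrow> var set \<Rightarrow> expr \<Rightarrow> heap \<Rightarrow> expr \<Rightarrow> bool"
  and bs_match :: "heap \<Rightarrow> var set \<Rightarrow> var list \<Rightarrow> mtch \<Rightarrow> heap \<Rightarrow> mtch \<Rightarrow> bool"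
where
  Whnf: "is_whnf w \<Longrightarrow> bs_eval \<Gamma> L w \<Gamma> w"
| Sat: "ar m = Some 0 \<Longrightarrow> bs_match \<Gamma> L [] m \<Delta> (Ret e) \<Longrightarrow> bs_eval \<Delta> L e \<Theta> w
        \<Longrightarrow> bs_eval \<Gamma> L (Lam m) \<Theta> w"
| Var: "y \<notin> dom \<Gamma> \<Longrightarrow> bs_eval \<Gamma> (insert y L) e \<Delta> w
        \<Longrightarrow> bs_eval (\<Gamma>(y \<mapsto> e)) L (Var y) (\<Delta>(y \<mapsto> w)) w"
| App: "bs_eval \<Gamma> L e \<Delta> (Lam m) \<Longrightarrow> bs_eval \<Delta> L (Lam (Arg y m)) \<Theta> w
        \<Longrightarrow> bs_eval \<Gamma> L (App e y) \<Theta> w"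
| Return: "bs_match \<Gamma> L A (Ret e) \<Gamma> (Ret (apps A e))"
| MFail: "bs_match \<Gamma> L A Fail \<Gamma> Fail"
| MArg: "bs_match \<Gamma> L (y # A) m \<Delta> r \<Longrightarrow> bs_match \<Gamma> L A (Arg y m) \<Delta> r"
| Bind: "bs_match \<Gamma> L A (subst1_m y x m) \<Delta> r
        \<Longrightarrow> bs_match \<Gamma> L (y # A) (PMatch (PVar x) m) \<Delta> r"
| Cons1: "bs_eval \<Gamma> L (Var y) \<Delta> (Con c ys) \<Longrightarrow> length ys = length ps
        \<Longrightarrow> bs_match \<Delta> L A (chain ys ps m) \<Theta> r
        \<Longrightarrow> bs_match \<Gamma> L (y # A) (PMatch (PCon c ps) m) \<Theta> r"
| Cons2: "bs_eval \<Gamma> L (Var y) \<Delta> (Con c' ys) \<Longrightarrow> c \<noteq> c'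
        \<Longrightarrow> bs_match \<Gamma> L (y # A) (PMatch (PCon c ps) m) \<Delta> Fail"
| Alt1: "bs_match \<Gamma> L A m1 \<Delta> (Ret e) \<Longrightarrow> bs_match \<Gamma> L A (Alt m1 m2) \<Delta> (Ret e)"
| Alt2: "bs_match \<Gamma> L A m1 \<Delta> Fail \<Longrightarrow> bs_match \<Delta> L A m2 \<Theta> r
        \<Longrightarrow> bs_match \<Gamma> L A (Alt m1 m2) \<Theta> r"
| Where: "length ys = length bs \<Longrightarrow> distinct ys
        \<Longrightarrow> set ys \<inter> (heap_vars \<Gamma> \<union> L \<union> set A \<union> vars_m (Where m bs)) = {}
        \<Longrightarrow> bs_match (\<Gamma>(ys [\<mapsto>] map (\<lambda>(x, e). subst_e (ren (map fst bs) ys) e) bs)) L A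
               (subst_m (ren (map fst bs) ys) m) \<Delta> r
        \<Longrightarrow> bs_match \<Gamma> L A (Where m bs) \<Delta> r"

datatype ctrl = Eval expr | Match "var list" mtch

datatype cont =
    KArg var
  | KUpd var
  | KRet
  | KAlt "var list" mtch
  | KCon "var list" con "pat list" mtch

type_synonym conf = "heap \<times> ctrl \<times> cont list"

fun cont_vars :: "cont \<Rightarrow> var set" where
  "cont_vars (KArg y) = {y}"
| "cont_vars (KUpd y) = {y}"
| "cont_vars KRet = {}"
| "cont_vars (KAlt A m) = set A \<union> vars_m m"
| "cont_vars (KCon A c ps m) = set A \<union> vars_m (PMatch (PCon c ps) m)"

definition stack_vars :: "cont list \<Rightarrow> var set" where
  "stack_vars S = (\<Union>k\<in>set S. cont_vars k)"

definition upd :: "cont list \<Rightarrow> var set" where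
  "upd S = {y. KUpd y \<in> set S}"

inductive step :: "conf \<Rightarrow> conf \<Rightarrow> bool" where
  App1: "step (\<Gamma>, Eval (App e y), S) (\<Gamma>, Eval e, KArg y # S)"
| App2: "ar m = Some n \<Longrightarrow> n > 0
         \<Longrightarrow> step (\<Gamma>, Eval (Lam m), KArg y # S) (\<Gamma>, Eval (Lam (Arg y m)), S)"
| Sat: "ar m = Some 0 \<Longrightarrow> step (\<Gamma>, Eval (Lam m), S) (\<Gamma>, Match [] m, KRet # S)"
| Var: "y \<notin> dom \<Gamma> \<Longrightarrow> step (\<Gamma>(y \<mapsto> e), Eval (Var y), S) (\<Gamma>, Eval e, KUpd y # S)"
| Update: "is_whnf w \<Longrightarrow> step (\<Gamma>, Eval w, KUpd y # S) (\<Gamma>(y \<mapsto> w), Eval w, S)"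
| Return1A: "A \<noteq> [] \<Longrightarrow> step (\<Gamma>, Match A (Ret e), S) (\<Gamma>, Match [] (Ret (apps A e)), S)"
| Return1B: "step (\<Gamma>, Match [] (Ret e), KRet # S) (\<Gamma>, Eval e, S)"
| Return2: "step (\<Gamma>, Match [] (Ret e), KAlt A' m # S) (\<Gamma>, Match [] (Ret e), S)"
| Bind: "step (\<Gamma>, Match (y # A) (PMatch (PVar x) m), S) (\<Gamma>, Match A (subst1_m y x m), S)"
| Cons1: "step (\<Gamma>, Match (y # A) (PMatch (PCon c ps) m), S)
               (\<Gamma>, Eval (Var y), KCon A c ps m # S)"
| Cons2: "length ys = length ps
          \<Longrightarrow> step (\<Gamma>, Eval (Con c ys), KCon A c ps m # S) (\<Gamma>, Match A (chain ys ps m), S)"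
| Fail: "c \<noteq> c' \<Longrightarrow> step (\<Gamma>, Eval (Con c' ys), KCon A c ps m # S) (\<Gamma>, Match [] Fail, S)"
| Arg: "step (\<Gamma>, Match A (Arg y m), S) (\<Gamma>, Match (y # A) m, S)"
| Alt1: "step (\<Gamma>, Match A (Alt m1 m2), S) (\<Gamma>, Match A m1, KAlt A m2 # S)"
| Alt2: "step (\<Gamma>, Match A' Fail, KAlt A m # S) (\<Gamma>, Match A m, S)"
| Where: "length ys = length bs \<Longrightarrow> distinct ys
          \<Longrightarrow> set ys \<inter> (heap_vars \<Gamma> \<union> set A \<union> vars_m (Where m bs) \<union> stack_vars S) = {}
          \<Longrightarrow> step (\<Gamma>, Match A (Where m bs), S)
                   (\<Gamma>(ys [\<mapsto>] map (\<lambda>(x, e). subst_e (ren (map fst bs) ys) e) bs),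
                    Match A (subst_m (ren (map fst bs) ys) m), S)"

definition balanced :: "conf \<Rightarrow> conf \<Rightarrow> bool" where
  "balanced c c' \<longleftrightarrow>
     snd (snd c') = snd (snd c) \<and>
     (\<exists>cs. cs \<noteq> [] \<and> hd cs = c \<and> last cs = c' \<and>
        (\<forall>i < length cs - 1. step (cs ! i) (cs ! Suc i)) \<and>
        (\<forall>d \<in> set cs. \<exists>ks. snd (snd d) = ks @ snd (snd c)))"

end

theory Submission
  imports Defs
begin

definition extS :: "cont list \<Rightarrow> conf \<Rightarrow> bool" where
  "extS S c \<longleftrightarrow> (\<exists>ks. snd (snd c) = ks @ S)"

inductive run :: "cont list \<Rightarrow> nat \<Rightarrow> conf \<Rightarrow> conf \<Rightarrow> bool" for S where
  r0: "extS S c \<Longrightarrow> run S 0 c c"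
| rS: "extS S c \<Longrightarrow> step c c1 \<Longrightarrow> run S n c1 c2 \<Longrightarrow> run S (Suc n) c c2"

lemma cons2_neq[simp]: "(x # y # S = S) = False" "(S = x # y # S) = False"
  by (auto dest: arg_cong[of _ _ length])

lemma run_extS: "run S n c c' \<Longrightarrow> extS S c"
  by (induction rule: run.induct) auto

lemma pop_contra: "extS S c1 \<Longrightarrow> S = x # snd (snd c1) \<Longrightarrow> False"
  by (auto simp: extS_def dest: arg_cong[of _ _ length])

lemma list_run: "cs \<noteq> [] \<Longrightarrow> (\<forall>i<length cs - 1. step (cs!i) (cs!Suc i))
  \<Longrightarrow> (\<forall>d\<in>set cs. extS S d) \<Longrightarrow> \<exists>n. run S n (hd cs) (last cs)"
proof (induction cs)
  case Nil thus ?case by simp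
next
  case (Cons a cs)
  show ?case
  proof (cases "cs = []")
    case True thus ?thesis using Cons.prems by (auto intro: run.r0)
  next
    case False
    have st: "step a (hd cs)" using Cons.prems(2) False by (cases cs) auto
    have "\<forall>i<length cs - 1. step (cs!i) (cs!Suc i)"
    proof (intro allI impI)
      fix i assume "i < length cs - 1"
      then have "Suc i < length (a#cs) - 1" by simp
      with Cons.prems(2) have "step ((a#cs)!Suc i) ((a#cs)!Suc (Suc i))" by blast
      thus "step (cs!i) (cs!Suc i)" by simp
    qed
    then obtain n where "run S n (hd cs) (last cs)" using Cons.IH False Cons.prems(3) by auto
    then have "run S (Suc n) a (last cs)" using st Cons.prems(3) by (auto intro: run.rS)
    thus ?thesis using False by auto
  qed
qed

lemma balanced_run: "balanced c c' \<Longrightarrow> \<exists>n. run (snd (snd c)) n c c'"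
  unfolding balanced_def
  using list_run[of _ "snd (snd c)"] by (auto simp: extS_def)

lemma step_shape: "step c c' \<Longrightarrow> snd (snd c') = snd (snd c) \<or> (\<exists>x. snd (snd c) = x # snd (snd c'))
   \<or> (\<exists>x. snd (snd c') = x # snd (snd c))"
  by (induction rule: step.induct) auto

lemma decomp: "run S n c c' \<Longrightarrow> snd (snd c) = ks @ k # S \<Longrightarrow> snd (snd c') = S \<Longrightarrow>
  \<exists>j d d'. j < n \<and> run (k#S) j c d \<and> snd (snd d) = k # S \<and> step d d' \<and> snd (snd d') = S
     \<and> run S (n - Suc j) d' c'"
proof (induction arbitrary: ks rule: run.induct)
  case (r0 c)
  thus ?case by (auto dest: arg_cong[of _ _ length])
next
  case (rS c c1 n c2)
  have exc: "extS (k#S) c" using rS.prems by (auto simp: extS_def)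
  from step_shape[OF rS.hyps(2)] consider
    (same) "snd (snd c1) = snd (snd c)" | (pop) x where "snd (snd c) = x # snd (snd c1)"
    | (push) x where "snd (snd c1) = x # snd (snd c)" by blast
  then show ?case
  proof cases
    case same
    then obtain j d d' where "j < n" "run (k#S) j c1 d" "snd (snd d) = k # S" "step d d'"
      "snd (snd d') = S" "run S (n - Suc j) d' c2" using rS by metis
    then show ?thesis using exc rS.hyps(2)
      by (intro exI[of _ "Suc j"] exI[of _ d] exI[of _ d']) (auto intro: run.rS)
  next
    case pop
    show ?thesis
    proof (cases ks)
      case Nil
      then have "snd (snd c1) = S" using pop rS.prems by simp
      moreover have "snd (snd c) = k # S" using Nil rS.prems by simp
      moreover have "run S (Suc n - Suc 0) c1 c2" using rS.hyps(3) by simp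
      ultimately show ?thesis using exc rS.hyps(2)
        by (intro exI[of _ 0] exI[of _ c] exI[of _ c1]) (auto intro: run.r0)
    next
      case (Cons x' ks')
      then have "snd (snd c1) = ks' @ k # S" using pop rS.prems by simp
      then obtain j d d' where "j < n" "run (k#S) j c1 d" "snd (snd d) = k # S" "step d d'"
        "snd (snd d') = S" "run S (n - Suc j) d' c2" using rS by metis
      then show ?thesis using exc rS.hyps(2)
        by (intro exI[of _ "Suc j"] exI[of _ d] exI[of _ d']) (auto intro: run.rS)
    qed
  next
    case push
    then have "snd (snd c1) = (x # ks) @ k # S" using rS.prems by simp
    then obtain j d d' where "j < n" "run (k#S) j c1 d" "snd (snd d) = k # S" "step d d'"
      "snd (snd d') = S" "run S (n - Suc j) d' c2" using rS by metis
    then show ?thesis using exc rS.hyps(2)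
      by (intro exI[of _ "Suc j"] exI[of _ d] exI[of _ d']) (auto intro: run.rS)
  qed
qed

lemma run_terminal: "run S j c c' \<Longrightarrow> snd (snd c) = S \<Longrightarrow>
   (\<And>c1. step c c1 \<Longrightarrow> \<exists>x. S = x # snd (snd c1)) \<Longrightarrow> c' = c"
proof (induction rule: run.induct)
  case (rS c c1 n c2)
  then obtain x where "S = x # snd (snd c1)" by blast
  moreover have "extS S c1" using rS.hyps(3) by (rule run_extS)
  ultimately show ?case using pop_contra by blast
qed auto

lemma whnf_pops: "is_whnf w \<Longrightarrow> step (\<Gamma>, Eval w, S) c1 \<Longrightarrow> \<exists>x. S = x # snd (snd c1)"
  by (erule step.cases) auto

lemma ret_pops: "step (\<Gamma>, Match [] (Ret e), S) c1 \<Longrightarrow> \<exists>x. S = x # snd (snd c1)"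
  by (erule step.cases) auto

lemma fail_pops: "step (\<Gamma>, Match A Fail, S) c1 \<Longrightarrow> \<exists>x. S = x # snd (snd c1)"
  by (erule step.cases) auto

lemma pop_KArg: "step d d' \<Longrightarrow> snd (snd d) = KArg y # S \<Longrightarrow> snd (snd d') = S \<Longrightarrow>
  \<exists>\<Gamma> m k. d = (\<Gamma>, Eval (Lam m), KArg y # S) \<and> ar m = Some k \<and> k > 0
     \<and> d' = (\<Gamma>, Eval (Lam (Arg y m)), S)"
  by (induction rule: step.induct) auto

lemma pop_KRet: "step d d' \<Longrightarrow> snd (snd d) = KRet # S \<Longrightarrow> snd (snd d') = S \<Longrightarrow>
  \<exists>\<Gamma> e. d = (\<Gamma>, Match [] (Ret e), KRet # S) \<and> d' = (\<Gamma>, Eval e, S)"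
  by (induction rule: step.induct) auto

lemma pop_KUpd: "step d d' \<Longrightarrow> snd (snd d) = KUpd y # S \<Longrightarrow> snd (snd d') = S \<Longrightarrow>
  \<exists>\<Gamma> w. d = (\<Gamma>, Eval w, KUpd y # S) \<and> is_whnf w \<and> d' = (\<Gamma>(y \<mapsto> w), Eval w, S)"
  by (induction rule: step.induct) auto

lemma pop_KCon: "step d d' \<Longrightarrow> snd (snd d) = KCon A c ps m # S \<Longrightarrow> snd (snd d') = S \<Longrightarrow>
  (\<exists>\<Gamma> ys. d = (\<Gamma>, Eval (Con c ys), KCon A c ps m # S) \<and> length ys = length ps
     \<and> d' = (\<Gamma>, Match A (chain ys ps m), S))
  \<or> (\<exists>\<Gamma> c' ys. c \<noteq> c' \<and> d = (\<Gamma>, Eval (Con c' ys), KCon A c ps m # S) \<and> d' = (\<Gamma>, Match [] Fail, S))"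
  by (induction rule: step.induct) auto

lemma pop_KAlt: "step d d' \<Longrightarrow> snd (snd d) = KAlt A m # S \<Longrightarrow> snd (snd d') = S \<Longrightarrow>
  (\<exists>\<Gamma> e. d = (\<Gamma>, Match [] (Ret e), KAlt A m # S) \<and> d' = (\<Gamma>, Match [] (Ret e), S))
  \<or> (\<exists>\<Gamma> A'. d = (\<Gamma>, Match A' Fail, KAlt A m # S) \<and> d' = (\<Gamma>, Match A m, S))"
  by (induction rule: step.induct) auto

lemma upd_simps[simp]: "upd (KArg y # S) = upd S" "upd (KRet # S) = upd S"
  "upd (KCon A c ps m # S) = upd S" "upd (KAlt A m # S) = upd S"
  "upd (KUpd y # S) = insert y (upd S)"
  by (auto simp: upd_def)

lemma upd_sub: "upd S \<subseteq> stack_vars S"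
  by (force simp: upd_def stack_vars_def)

lemma step_Eval_cases:
  assumes "step (\<Gamma>, Eval e, S) c1"
  obtains (pop) x where "S = x # snd (snd c1)"
  | (app) e0 y where "e = App e0 y" "c1 = (\<Gamma>, Eval e0, KArg y # S)"
  | (sat) m where "e = Lam m" "ar m = Some 0" "c1 = (\<Gamma>, Match [] m, KRet # S)"
  | (var) y e0 \<Gamma>0 where "y \<notin> dom \<Gamma>0" "\<Gamma> = \<Gamma>0(y \<mapsto> e0)" "e = Var y"
      "c1 = (\<Gamma>0, Eval e0, KUpd y # S)"
  using assms by (cases rule: step.cases) auto

lemma step_Match_cases:
  assumes "step (\<Gamma>, Match A m, S) c1"
  obtains (pop) x where "S = x # snd (snd c1)"
  | (ret) e where "A \<noteq> []" "m = Ret e" "c1 = (\<Gamma>, Match [] (Ret (apps A e)), S)"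
  | (bind) y A' x m' where "A = y # A'" "m = PMatch (PVar x) m'" "c1 = (\<Gamma>, Match A' (subst1_m y x m'), S)"
  | (cons) y A' c ps m' where "A = y # A'" "m = PMatch (PCon c ps) m'"
      "c1 = (\<Gamma>, Eval (Var y), KCon A' c ps m' # S)"
  | (arg) y m' where "m = Arg y m'" "c1 = (\<Gamma>, Match (y # A) m', S)"
  | (alt) m1 m2 where "m = Alt m1 m2" "c1 = (\<Gamma>, Match A m1, KAlt A m2 # S)"
  | (wher) ys bs m' where "m = Where m' bs" "length ys = length bs" "distinct ys"
      "set ys \<inter> (heap_vars \<Gamma> \<union> set A \<union> vars_m (Where m' bs) \<union> stack_vars S) = {}"
      "c1 = (\<Gamma>(ys [\<mapsto>] map (\<lambda>(x, e). subst_e (ren (map fst bs) ys) e) bs),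
                    Match A (subst_m (ren (map fst bs) ys) m'), S)"
  using assms by (cases rule: step.cases) auto

lemma main:
  "(\<forall>\<Gamma> e S \<Delta> w. is_whnf w \<longrightarrow> run S n (\<Gamma>, Eval e, S) (\<Delta>, Eval w, S)
      \<longrightarrow> bs_eval \<Gamma> (upd S) e \<Delta> w)
 \<and> (\<forall>\<Gamma> A m S \<Delta> A' r. is_result r \<longrightarrow> (r = Fail \<or> A' = [])
      \<longrightarrow> run S n (\<Gamma>, Match A m, S) (\<Delta>, Match A' r, S)
      \<longrightarrow> bs_match \<Gamma> (upd S) A m \<Delta> r)"
proof (induction n rule: less_induct)
  case (less n)
  have IHe: "\<And>j \<Gamma> e S \<Delta> w. j < n \<Longrightarrow> is_whnf w \<Longrightarrow> run S j (\<Gamma>, Eval e, S) (\<Delta>, Eval w, S)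
      \<Longrightarrow> bs_eval \<Gamma> (upd S) e \<Delta> w" using less by blast
  have IHm: "\<And>j \<Gamma> A m S \<Delta> A' r. j < n \<Longrightarrow> is_result r \<Longrightarrow> (r = Fail \<or> A' = [])
      \<Longrightarrow> run S j (\<Gamma>, Match A m, S) (\<Delta>, Match A' r, S)
      \<Longrightarrow> bs_match \<Gamma> (upd S) A m \<Delta> r" using less by blast
  show ?case
  proof (intro conjI allI impI)
    fix \<Gamma> e S \<Delta> w assume w: "is_whnf w" and R: "run S n (\<Gamma>, Eval e, S) (\<Delta>, Eval w, S)"
    show "bs_eval \<Gamma> (upd S) e \<Delta> w"
    proof (cases n)
      case 0
      then have "e = w" "\<Gamma> = \<Delta>" using R by (auto elim: run.cases)
      thus ?thesis using w by (auto intro: bs_eval_bs_match.Whnf)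
    next
      case (Suc n')
      then obtain c1 where st: "step (\<Gamma>, Eval e, S) c1" and R1: "run S n' c1 (\<Delta>, Eval w, S)"
        using R by (auto elim: run.cases)
      have ex1: "extS S c1" using R1 by (rule run_extS)
      from st show ?thesis
      proof (cases rule: step_Eval_cases)
        case (pop x) thus ?thesis using ex1 pop_contra by blast
      next
        case (app e0 y)
        obtain j d d' where j: "j < n'" "run (KArg y # S) j (\<Gamma>, Eval e0, KArg y # S) d"
          "snd (snd d) = KArg y # S" "step d d'" "snd (snd d') = S" "run S (n' - Suc j) d' (\<Delta>, Eval w, S)"
          using decomp[of S n' c1 "(\<Delta>, Eval w, S)" "[]" "KArg y"] R1 app(2) by auto
        obtain \<Gamma>1 m k where d: "d = (\<Gamma>1, Eval (Lam m), KArg y # S)" "ar m = Some k" "k > 0"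
          "d' = (\<Gamma>1, Eval (Lam (Arg y m)), S)" using pop_KArg[OF j(4,3,5)] by blast
        have "bs_eval \<Gamma> (upd S) e0 \<Gamma>1 (Lam m)"
          using IHe[OF _ _ j(2)[unfolded d(1)]] j d Suc by auto
        moreover have "bs_eval \<Gamma>1 (upd S) (Lam (Arg y m)) \<Delta> w"
          using IHe[OF _ _ j(6)[unfolded d(4)]] j d Suc w by auto
        ultimately show ?thesis using app by (auto intro: bs_eval_bs_match.App)
      next
        case (sat m)
        obtain j d d' where j: "j < n'" "run (KRet # S) j (\<Gamma>, Match [] m, KRet # S) d"
          "snd (snd d) = KRet # S" "step d d'" "snd (snd d') = S" "run S (n' - Suc j) d' (\<Delta>, Eval w, S)"
          using decomp[of S n' c1 "(\<Delta>, Eval w, S)" "[]" "KRet"] R1 sat(3) by auto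
        obtain \<Gamma>1 e1 where d: "d = (\<Gamma>1, Match [] (Ret e1), KRet # S)" "d' = (\<Gamma>1, Eval e1, S)"
          using pop_KRet[OF j(4,3,5)] by blast
        have "bs_match \<Gamma> (upd S) [] m \<Gamma>1 (Ret e1)"
          using IHm[OF _ _ _ j(2)[unfolded d(1)]] j d Suc by auto
        moreover have "bs_eval \<Gamma>1 (upd S) e1 \<Delta> w"
          using IHe[OF _ _ j(6)[unfolded d(2)]] j d Suc w by auto
        ultimately show ?thesis using sat by (auto intro: bs_eval_bs_match.Sat)
      next
        case (var y e0 \<Gamma>0)
        obtain j d d' where j: "j < n'" "run (KUpd y # S) j (\<Gamma>0, Eval e0, KUpd y # S) d"
          "snd (snd d) = KUpd y # S" "step d d'" "snd (snd d') = S" "run S (n' - Suc j) d' (\<Delta>, Eval w, S)"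
          using decomp[of S n' c1 "(\<Delta>, Eval w, S)" "[]" "KUpd y"] R1 var(4) by auto
        obtain \<Gamma>1 w1 where d: "d = (\<Gamma>1, Eval w1, KUpd y # S)" "is_whnf w1"
          "d' = (\<Gamma>1(y \<mapsto> w1), Eval w1, S)"
          using pop_KUpd[OF j(4,3,5)] by blast
        have "bs_eval \<Gamma>0 (insert y (upd S)) e0 \<Gamma>1 w1"
          using IHe[OF _ _ j(2)[unfolded d(1)]] j d Suc by auto
        moreover have "(\<Delta>, Eval w, S) = d'"
          using run_terminal[OF j(6)] d whnf_pops by auto
        ultimately show ?thesis using var d by (auto intro: bs_eval_bs_match.Var)
      qed
    qed
  next
    fix \<Gamma> A m S \<Delta> A' r assume r: "is_result r" and rA: "r = Fail \<or> A' = []"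
      and R: "run S n (\<Gamma>, Match A m, S) (\<Delta>, Match A' r, S)"
    have termi: "(\<Delta>, Match A' r, S) = d'" if "run S k d' (\<Delta>, Match A' r, S)" "d' = (\<Gamma>', Match A'' r', S)"
      "r' = Fail \<or> (A'' = [] \<and> (\<exists>e. r' = Ret e))" for k d' \<Gamma>' A'' r'
      using that(3)
    proof
      assume "r' = Fail" thus ?thesis using run_terminal[OF that(1)] that(2) fail_pops by auto
    next
      assume "A'' = [] \<and> (\<exists>e. r' = Ret e)" thus ?thesis using run_terminal[OF that(1)] that(2) ret_pops by auto
    qed
    show "bs_match \<Gamma> (upd S) A m \<Delta> r"
    proof (cases n)
      case 0
      then have "A = A'" "m = r" "\<Gamma> = \<Delta>" using R by (auto elim: run.cases)
      thus ?thesis using r rA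
        by (cases r) (auto intro: bs_eval_bs_match.MFail bs_eval_bs_match.Return[of _ _ "[]", simplified apps_def, simplified])
    next
      case (Suc n')
      then obtain c1 where st: "step (\<Gamma>, Match A m, S) c1" and R1: "run S n' c1 (\<Delta>, Match A' r, S)"
        using R by (auto elim: run.cases)
      have ex1: "extS S c1" using R1 by (rule run_extS)
      from st show ?thesis
      proof (cases rule: step_Match_cases)
        case (pop x) thus ?thesis using ex1 pop_contra by blast
      next
        case (ret e)
        have "(\<Delta>, Match A' r, S) = c1" using termi[OF R1] ret by auto
        thus ?thesis using ret by (auto intro: bs_eval_bs_match.Return)
      next
        case (bind y A0 x m')
        thus ?thesis using IHm[OF _ _ _ R1[unfolded bind(3)]] R1 Suc r rA by (auto intro: bs_eval_bs_match.Bind)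
      next
        case (arg y m')
        thus ?thesis using IHm[OF _ _ _ R1[unfolded arg(2)]] R1 Suc r rA by (auto intro: bs_eval_bs_match.MArg)
      next
        case (wher ys bs m')
        have bm: "bs_match (\<Gamma>(ys [\<mapsto>] map (\<lambda>(x, e). subst_e (ren (map fst bs) ys) e) bs)) (upd S) A
               (subst_m (ren (map fst bs) ys) m') \<Delta> r"
          using IHm[OF _ _ _ R1[unfolded wher(5)]] R1 Suc r rA wher by auto
        have dj: "set ys \<inter> (heap_vars \<Gamma> \<union> upd S \<union> set A \<union> vars_m (Where m' bs)) = {}"
          using wher(4) upd_sub by blast
        show ?thesis unfolding wher(1) by (rule bs_eval_bs_match.Where[OF wher(2,3) dj bm])
      next
        case (cons y A0 c ps m')
        obtain j d d' where j: "j < n'" "run (KCon A0 c ps m' # S) j (\<Gamma>, Eval (Var y), KCon A0 c ps m' # S) d"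
          "snd (snd d) = KCon A0 c ps m' # S" "step d d'" "snd (snd d') = S"
          "run S (n' - Suc j) d' (\<Delta>, Match A' r, S)"
          using decomp[of S n' c1 "(\<Delta>, Match A' r, S)" "[]" "KCon A0 c ps m'"] R1 cons(3) by auto
        from pop_KCon[OF j(4,3,5)] show ?thesis
        proof (elim disjE exE conjE)
          fix \<Gamma>1 ys assume d: "d = (\<Gamma>1, Eval (Con c ys), KCon A0 c ps m' # S)" "length ys = length ps"
            "d' = (\<Gamma>1, Match A0 (chain ys ps m'), S)"
          have "bs_eval \<Gamma> (upd S) (Var y) \<Gamma>1 (Con c ys)"
            using IHe[OF _ _ j(2)[unfolded d(1)]] j d Suc by auto
          moreover have "bs_match \<Gamma>1 (upd S) A0 (chain ys ps m') \<Delta> r"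
            using IHm[OF _ _ _ j(6)[unfolded d(3)]] j d Suc r rA by auto
          ultimately show ?thesis using cons d by (auto intro: bs_eval_bs_match.Cons1)
        next
          fix \<Gamma>1 c' ys assume d: "c \<noteq> c'" "d = (\<Gamma>1, Eval (Con c' ys), KCon A0 c ps m' # S)"
            "d' = (\<Gamma>1, Match [] Fail, S)"
          have "bs_eval \<Gamma> (upd S) (Var y) \<Gamma>1 (Con c' ys)"
            using IHe[OF _ _ j(2)[unfolded d(2)]] j d Suc by auto
          moreover have "(\<Delta>, Match A' r, S) = d'" using termi[OF j(6) d(3)] by auto
          ultimately show ?thesis using cons d by (auto intro: bs_eval_bs_match.Cons2)
        qed
      next
        case (alt m1 m2)
        obtain j d d' where j: "j < n'" "run (KAlt A m2 # S) j (\<Gamma>, Match A m1, KAlt A m2 # S) d"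
          "snd (snd d) = KAlt A m2 # S" "step d d'" "snd (snd d') = S"
          "run S (n' - Suc j) d' (\<Delta>, Match A' r, S)"
          using decomp[of S n' c1 "(\<Delta>, Match A' r, S)" "[]" "KAlt A m2"] R1 alt(2) by auto
        from pop_KAlt[OF j(4,3,5)] show ?thesis
        proof (elim disjE exE conjE)
          fix \<Gamma>1 e1 assume d: "d = (\<Gamma>1, Match [] (Ret e1), KAlt A m2 # S)"
            "d' = (\<Gamma>1, Match [] (Ret e1), S)"
          have "bs_match \<Gamma> (upd S) A m1 \<Gamma>1 (Ret e1)"
            using IHm[OF _ _ _ j(2)[unfolded d(1)]] j d Suc by auto
          moreover have "(\<Delta>, Match A' r, S) = d'" using termi[OF j(6) d(2)] by auto
          ultimately show ?thesis using alt d by (auto intro: bs_eval_bs_match.Alt1)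
        next
          fix \<Gamma>1 A1 assume d: "d = (\<Gamma>1, Match A1 Fail, KAlt A m2 # S)" "d' = (\<Gamma>1, Match A m2, S)"
          have "bs_match \<Gamma> (upd S) A m1 \<Gamma>1 Fail"
            using IHm[OF _ _ _ j(2)[unfolded d(1)]] j d Suc by auto
          moreover have "bs_match \<Gamma>1 (upd S) A m2 \<Delta> r"
            using IHm[OF _ _ _ j(6)[unfolded d(2)]] j d Suc r rA by auto
          ultimately show ?thesis using alt d by (auto intro: bs_eval_bs_match.Alt2)
        qed
      qed
    qed
  qed
qed

theorem theorem4p5:
  shows "(\<forall>\<Gamma> e S \<Delta> w. is_whnf w \<longrightarrow> balanced (\<Gamma>, Eval e, S) (\<Delta>, Eval w, S)
            \<longrightarrow> bs_eval \<Gamma> (upd S) e \<Delta> w)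
       \<and> (\<forall>\<Gamma> A m S \<Delta> r. is_result r \<longrightarrow> balanced (\<Gamma>, Match A m, S) (\<Delta>, Match [] r, S)
            \<longrightarrow> bs_match \<Gamma> (upd S) A m \<Delta> r)"
proof (intro conjI allI impI)
  fix \<Gamma> e S \<Delta> w assume w: "is_whnf w" and b: "balanced (\<Gamma>, Eval e, S) (\<Delta>, Eval w, S)"
  obtain n where "run S n (\<Gamma>, Eval e, S) (\<Delta>, Eval w, S)" using balanced_run[OF b] by auto
  thus "bs_eval \<Gamma> (upd S) e \<Delta> w" using main[of n] w by blast
next
  fix \<Gamma> A m S \<Delta> r assume r: "is_result r" and b: "balanced (\<Gamma>, Match A m, S) (\<Delta>, Match [] r, S)"
  obtain n where "run S n (\<Gamma>, Match A m, S) (\<Delta>, Match [] r, S)" using balanced_run[OF b] by auto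
  thus "bs_match \<Gamma> (upd S) A m \<Delta> r" using main[of n] r by blast
qed

end
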